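(* Let $\mathbf{u}=(u_1,u_2),\mathbf{v}=(v_1,v_2)\in\mathbb{R}^2$ be fixed linearly independent unit vectors, and let $D_1\subset\mathbb{R}^2$ be an open disc centered at the origin. Let $\mathbf{f}=(f_1,f_2)$ be a vector field on $\mathbb{R}^2$ with $f_1,f_2\in C^2_c(D_1)$. Then $$\operatorname{div}\mathbf{f}=-\frac{1}{\det(\mathbf{v},\mathbf{u})}\,D_{\mathbf{u}}D_{\mathbf{v}}\,\mathcal{T}\mathbf{f},$$ where $\det(\mathbf{v},\mathbf{u})=v_1u_2-u_1v_2$. In particular, the operator $\mathcal{T}$ is injective (invertible) on compactly supported (in $D_1$, with $C^2$ components) curl-free vector fields.
   Context: For a function $h$ on $\mathbb{R}^2$ and a unit vector $\mathbf{u}$, $\mathcal{X}_{\mathbf{u}}h(\mathbf{x})=\int_0^\infty h(\mathbf{x}+t\mathbf{u})\,dt$ and $D_{\mathbf{u}}h=\mathbf{u}\cdot\nabla h$. For $\mathbf{x}=(x_1,x_2)$ set $\mathbf{x}^\perp=(-x_2,x_1)$. The transverse V-line transform is $\mathcal{T}\mathbf{f}=-\mathcal{X}_{\mathbf{u}}(\mathbf{f}\cdot\mathbf{u}^\perp)+\mathcal{X}_{\mathbf{v}}(\mathbf{f}\cdot\mathbf{v}^\perp)$, a function on $\mathbb{R}^2$. Here $\operatorname{div}\mathbf{f}=\frac{\partial f_1}{\partial x_1}+\frac{\partial f_2}{\partial x_2}$ and curl-free means $\frac{\partial f_2}{\partial x_1}-\frac{\partial f_1}{\partial x_2}=0$.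 *)

theory Defs
  imports "HOL-Analysis.Analysis"
begin

definition perp :: "real^2 \<Rightarrow> real^2" where
  "perp x = vector [- (x$2), x$1]"

definition dirD :: "real^2 \<Rightarrow> (real^2 \<Rightarrow> real) \<Rightarrow> real^2 \<Rightarrow> real" where
  "dirD u h x = frechet_derivative h (at x) u"

definition rayX :: "real^2 \<Rightarrow> (real^2 \<Rightarrow> real) \<Rightarrow> real^2 \<Rightarrow> real" where
  "rayX u h x = integral {0..} (\<lambda>t::real. h (x + t *\<^sub>R u))"

definition TV :: "real^2 \<Rightarrow> real^2 \<Rightarrow> (real^2 \<Rightarrow> real^2) \<Rightarrow> real^2 \<Rightarrow> real" where
  "TV u v f x = - rayX u (\<lambda>y. f y \<bullet> perp u) x + rayX v (\<lambda>y. f y \<bullet> perp v) x"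

definition divg :: "(real^2 \<Rightarrow> real^2) \<Rightarrow> real^2 \<Rightarrow> real" where
  "divg f x = frechet_derivative (\<lambda>y. f y $ 1) (at x) (axis 1 1)
            + frechet_derivative (\<lambda>y. f y $ 2) (at x) (axis 2 1)"

definition curl_free :: "(real^2 \<Rightarrow> real^2) \<Rightarrow> bool" where
  "curl_free f \<longleftrightarrow> (\<forall>x. frechet_derivative (\<lambda>y. f y $ 2) (at x) (axis 1 1)
                         - frechet_derivative (\<lambda>y. f y $ 1) (at x) (axis 2 1) = 0)"

definition C1_fun :: "(real^2 \<Rightarrow> real) \<Rightarrow> bool" where
  "C1_fun h \<longleftrightarrow> (\<exists>g::real^2 \<Rightarrow> real^2. (\<forall>x. (h has_derivative (\<lambda>w. g x \<bullet> w)) (at x))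
                    \<and> continuous_on UNIV g)"

definition C2_fun :: "(real^2 \<Rightarrow> real) \<Rightarrow> bool" where
  "C2_fun h \<longleftrightarrow> (\<exists>g::real^2 \<Rightarrow> real^2. (\<forall>x. (h has_derivative (\<lambda>w. g x \<bullet> w)) (at x))
                    \<and> (\<forall>i. C1_fun (\<lambda>x. g x $ i)))"

definition C2c_on :: "(real^2) set \<Rightarrow> (real^2 \<Rightarrow> real) \<Rightarrow> bool" where
  "C2c_on D h \<longleftrightarrow> C2_fun h \<and> compact (closure {x. h x \<noteq> 0})
                     \<and> closure {x. h x \<noteq> 0} \<subseteq> D"

end

theory Submission
  imports Defs "HOL-Complex_Analysis.Cauchy_Integral_Formula"
begin


lemma rayX_restrict:
  fixes u x x0 :: "real^2"
  assumes u: "norm u = 1" and k: "\<forall>y. R < norm y \<longrightarrow> k y = 0" and x: "norm (x - x0) < 1" and R: "0 \<le> R"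
  shows "rayX u k x = integral {0..norm x0 + R + 2} (\<lambda>t. k (x + t *\<^sub>R u))"
proof -
  define T where "T = norm x0 + R + 2"
  have z: "k (x + t *\<^sub>R u) = 0" if "t > T" for t
  proof -
    have "norm x \<le> norm x0 + 1" using x norm_triangle_ineq2[of x x0] by linarith
    moreover have "norm (t *\<^sub>R u) \<le> norm (x + t *\<^sub>R u) + norm x"
      by (metis add_diff_cancel_left' norm_triangle_ineq4 add.commute)
    moreover have "norm (t *\<^sub>R u) = t" proof -
      have "0 < t" using that T_def R norm_ge_zero[of x0] by linarith
      then show ?thesis using u by simp
    qed
    ultimately have "R < norm (x + t *\<^sub>R u)" using that T_def by linarith
    then show ?thesis using k by blast
  qed
  have "rayX u k x = integral {0..} (\<lambda>t. if t \<in> {0..T} then k (x + t *\<^sub>R u) else 0)"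
    unfolding rayX_def by (rule integral_cong) (use z in auto)
  also have "\<dots> = integral ({0..T} \<inter> {0..}) (\<lambda>t. k (x + t *\<^sub>R u))"
    by (rule integral_restrict_Int)
  also have "{0..T} \<inter> {0..} = {0..T}" by auto
  finally show ?thesis unfolding T_def .
qed

lemma grad_zero:
  fixes h :: "real^2 \<Rightarrow> real"
  assumes hd: "\<forall>x. (h has_derivative (\<lambda>w. G x \<bullet> w)) (at x)"
    and k: "\<forall>y. R < norm y \<longrightarrow> h y = 0" and y: "R < norm y"
  shows "G y = 0"
proof -
  have o: "open {y::real^2. R < norm y}" by (intro open_Collect_less continuous_intros)
  have "(h has_derivative (\<lambda>w. 0)) (at y)"
    by (rule has_derivative_transform_within_open[OF has_derivative_const o]) (use y k in auto)
  with hd have "(\<lambda>w. G y \<bullet> w) = (\<lambda>w. 0)" using has_derivative_unique by blast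
  then have "G y \<bullet> G y = 0" by metis
  then show ?thesis by simp
qed

lemma rayX_deriv:
  fixes u x0 :: "real^2" and h :: "real^2 \<Rightarrow> real"
  assumes u: "norm u = 1" and hd: "\<forall>x. (h has_derivative (\<lambda>w. G x \<bullet> w)) (at x)"
    and Gc: "continuous_on UNIV G" and k: "\<forall>y. R < norm y \<longrightarrow> h y = 0" and R: "0 \<le> R"
  shows "(rayX u h has_derivative (\<lambda>w. rayX u (\<lambda>y. G y \<bullet> w) x0)) (at x0)"
proof -
  define T where "T = norm x0 + R + 2"
  define U where "U = ball x0 (1::real)"
  have hc: "continuous_on UNIV h"
    by (rule continuous_at_imp_continuous_on) (use hd has_derivative_continuous in blast)
  have fx: "((\<lambda>x. h (x + t *\<^sub>R u)) has_derivative blinfun_apply (blinfun_inner_left (G (x + t *\<^sub>R u)))) (at x within U)"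
    for x t
  proof -
    have "((\<lambda>x. h (x + t *\<^sub>R u)) has_derivative (\<lambda>w. G (x + t *\<^sub>R u) \<bullet> w)) (at x within U)"
    proof -
      have d1: "((\<lambda>x. x + t *\<^sub>R u) has_derivative (\<lambda>w. w)) (at x within U)"
        by (auto intro!: derivative_eq_intros)
      show ?thesis using has_derivative_compose[OF d1, of h] hd by blast
    qed
    then show ?thesis by (simp add: inner_commute)
  qed
  have integ: "(\<lambda>t. h (x + t *\<^sub>R u)) integrable_on cbox 0 T" for x
  proof -
    have "continuous_on (cbox 0 T) (\<lambda>t. x + t *\<^sub>R u)" by (intro continuous_intros)
    then have "continuous_on (cbox 0 T) (\<lambda>t. h (x + t *\<^sub>R u))"
      using continuous_on_compose2[OF hc] by blast
    then show ?thesis by (rule integrable_continuous)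
  qed
  have cont: "continuous_on (U \<times> cbox 0 T) (\<lambda>(x, t). blinfun_inner_left (G (x + t *\<^sub>R u)))"
  proof -
    have "continuous_on UNIV (blinfun_inner_left :: real^2 \<Rightarrow> _)"
      by (simp add: linear_continuous_on bounded_linear_blinfun_inner_left)
    note bl = this
    have c1: "continuous_on (U \<times> cbox 0 T) (\<lambda>p. fst p + snd p *\<^sub>R u)" by (intro continuous_intros)
    have c2: "continuous_on (U \<times> cbox 0 T) (\<lambda>p. G (fst p + snd p *\<^sub>R u))"
      using continuous_on_compose2[OF Gc c1] by blast
    have c3: "continuous_on (U \<times> cbox 0 T) (\<lambda>p. blinfun_inner_left (G (fst p + snd p *\<^sub>R u)))"
      using continuous_on_compose2[OF bl c2] by blast
    then show ?thesis by (simp add: case_prod_unfold)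
  qed
  have L: "((\<lambda>x. integral (cbox 0 T) (\<lambda>t. h (x + t *\<^sub>R u))) has_derivative
       integral (cbox 0 T) (\<lambda>t. blinfun_inner_left (G (x0 + t *\<^sub>R u)))) (at x0 within U)"
    by (rule leibniz_rule[OF fx integ cont]) (auto simp: U_def)
  then have L2: "((\<lambda>x. integral {0..T} (\<lambda>t. h (x + t *\<^sub>R u))) has_derivative
       integral {0..T} (\<lambda>t. blinfun_inner_left (G (x0 + t *\<^sub>R u)))) (at x0)"
    using at_within_open[of x0 U] by (simp add: U_def)
  have L3: "(rayX u h has_derivative
       integral {0..T} (\<lambda>t. blinfun_inner_left (G (x0 + t *\<^sub>R u)))) (at x0)"
  proof (rule has_derivative_transform_within_open[OF L2, of U])
    show "open U" "x0 \<in> U" by (auto simp: U_def)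
    fix x assume "x \<in> U"
    then have "norm (x - x0) < 1" by (simp add: U_def dist_norm norm_minus_commute)
    from rayX_restrict[OF u k this R] show "integral {0..T} (\<lambda>t. h (x + t *\<^sub>R u)) = rayX u h x"
      by (simp add: T_def)
  qed
  show ?thesis
  proof (rule has_derivative_eq_rhs[OF L3], rule ext)
    fix w
    have ib: "(\<lambda>t. blinfun_inner_left (G (x0 + t *\<^sub>R u))) integrable_on {0..T}"
    proof -
      have bl: "continuous_on UNIV (blinfun_inner_left :: real^2 \<Rightarrow> _)"
        by (simp add: linear_continuous_on bounded_linear_blinfun_inner_left)
      have c1: "continuous_on {0..T} (\<lambda>t. x0 + t *\<^sub>R u)" by (intro continuous_intros)
      have c2: "continuous_on {0..T} (\<lambda>t. G (x0 + t *\<^sub>R u))"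
        using continuous_on_compose2[OF Gc c1] by blast
      have c3: "continuous_on {0..T} (\<lambda>t. blinfun_inner_left (G (x0 + t *\<^sub>R u)))"
        using continuous_on_compose2[OF bl c2] by blast
      then show ?thesis by (rule integrable_continuous_real)
    qed
    have kz: "\<forall>y. R < norm y \<longrightarrow> G y \<bullet> w = 0" using grad_zero[OF hd k] by auto
    show "blinfun_apply (integral {0..T} (\<lambda>t. blinfun_inner_left (G (x0 + t *\<^sub>R u)))) w =
        rayX u (\<lambda>y. G y \<bullet> w) x0"
    proof -
      have "rayX u (\<lambda>y. G y \<bullet> w) x0 = integral {0..T} (\<lambda>t. G (x0 + t *\<^sub>R u) \<bullet> w)"
        using rayX_restrict[OF u kz _ R, of x0 x0] by (simp add: T_def)
      moreover have "blinfun_apply (integral {0..T} (\<lambda>t. blinfun_inner_left (G (x0 + t *\<^sub>R u)))) w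
          = integral {0..T} (\<lambda>t. G (x0 + t *\<^sub>R u) \<bullet> w)"
        by (simp add: blinfun_apply_integral[OF ib] inner_commute)
      ultimately show ?thesis by simp
    qed
  qed
qed

lemma rayX_ftc:
  fixes u x :: "real^2" and h :: "real^2 \<Rightarrow> real"
  assumes u: "norm u = 1" and hd: "\<forall>x. (h has_derivative (\<lambda>w. G x \<bullet> w)) (at x)"
    and k: "\<forall>y. R < norm y \<longrightarrow> h y = 0" and R: "0 \<le> R"
  shows "rayX u (\<lambda>y. G y \<bullet> u) x = - h x"
proof -
  define T where "T = norm x + R + 2"
  have kz: "\<forall>y. R < norm y \<longrightarrow> G y \<bullet> u = 0" using grad_zero[OF hd k] by auto
  have T0: "0 \<le> T" unfolding T_def using R by simp
  have "((\<lambda>t. G (x + t *\<^sub>R u) \<bullet> u) has_integral (h (x + T *\<^sub>R u) - h (x + 0 *\<^sub>R u))) {0..T}"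
  proof (rule fundamental_theorem_of_calculus[OF T0])
    fix t assume "t \<in> {0..T}"
    have "((\<lambda>t. h (x + t *\<^sub>R u)) has_derivative (\<lambda>s. G (x + t *\<^sub>R u) \<bullet> (s *\<^sub>R u))) (at t within {0..T})"
    proof -
      have d1: "((\<lambda>t. x + t *\<^sub>R u) has_derivative (\<lambda>s. s *\<^sub>R u)) (at t within {0..T})"
        by (auto intro!: derivative_eq_intros)
      show ?thesis using has_derivative_compose[OF d1, of h] hd by blast
    qed
    then show "((\<lambda>t. h (x + t *\<^sub>R u)) has_vector_derivative G (x + t *\<^sub>R u) \<bullet> u) (at t within {0..T})"
      by (simp add: has_vector_derivative_def mult.commute)
  qed
  moreover have "h (x + T *\<^sub>R u) = 0"
  proof -
    have "norm (T *\<^sub>R u) \<le> norm (x + T *\<^sub>R u) + norm x"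
      by (metis add_diff_cancel_left' norm_triangle_ineq4)
    moreover have "norm (T *\<^sub>R u) = T" using u T0 by simp
    ultimately show ?thesis using k T_def by auto
  qed
  ultimately have "integral {0..T} (\<lambda>t. G (x + t *\<^sub>R u) \<bullet> u) = - h x"
    by (simp add: integral_unique)
  then show ?thesis using rayX_restrict[OF u kz _ R, of x x] T_def by simp
qed



definition C1G :: "(real^2 \<Rightarrow> real) \<Rightarrow> (real^2 \<Rightarrow> real^2) \<Rightarrow> bool" where
  "C1G h G \<longleftrightarrow> (\<forall>x. (h has_derivative (\<lambda>w. G x \<bullet> w)) (at x)) \<and> continuous_on UNIV G"

lemma C1G_lin:
  assumes "C1G h G" "C1G k K"
  shows "C1G (\<lambda>x. a * h x + b * k x) (\<lambda>x. a *\<^sub>R G x + b *\<^sub>R K x)"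
proof -
  have hd: "\<And>x. (h has_derivative (\<lambda>w. G x \<bullet> w)) (at x)" and kd: "\<And>x. (k has_derivative (\<lambda>w. K x \<bullet> w)) (at x)"
    and gc: "continuous_on UNIV G" and kc: "continuous_on UNIV K" using assms unfolding C1G_def by auto
  have d: "((\<lambda>x. a * h x + b * k x) has_derivative (\<lambda>w. (a *\<^sub>R G x + b *\<^sub>R K x) \<bullet> w)) (at x)" for x
  proof (rule has_derivative_eq_rhs)
    show "((\<lambda>x. a * h x + b * k x) has_derivative (\<lambda>w. a * (G x \<bullet> w) + b * (K x \<bullet> w))) (at x)"
      by (intro has_derivative_add has_derivative_mult_right hd kd)
    show "(\<lambda>w. a * (G x \<bullet> w) + b * (K x \<bullet> w)) = (\<lambda>w. (a *\<^sub>R G x + b *\<^sub>R K x) \<bullet> w)"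
      by (simp add: inner_add_left)
  qed
  have c: "continuous_on UNIV (\<lambda>x. a *\<^sub>R G x + b *\<^sub>R K x)"
    by (intro continuous_on_add continuous_on_scaleR continuous_on_const gc kc)
  show ?thesis unfolding C1G_def
    apply (rule conjI)
     apply (rule allI)
     apply (rule d)
    apply (rule c)
    done
qed

lemma C1_fun_C1G: "C1_fun h \<Longrightarrow> \<exists>G. C1G h G"
  unfolding C1_fun_def C1G_def by assumption

lemma C2c_supp:
  assumes "C2c_on (ball 0 r) h" "r \<le> norm y"
  shows "h y = 0"
proof -
  have "y \<notin> ball 0 r" using assms(2) by (simp add: dist_norm)
  moreover have "closure {x. h x \<noteq> 0} \<subseteq> ball 0 r" using assms(1) unfolding C2c_on_def by blast
  ultimately have "y \<notin> closure {x. h x \<noteq> 0}" by blast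
  then have "y \<notin> {x. h x \<noteq> 0}" by (rule contra_subsetD[OF closure_subset])
  then show ?thesis by simp
qed

lemma C2c_struct:
  assumes "C2c_on (ball 0 r) h"
  shows "\<exists>G. C1G h G \<and> (\<forall>i. \<exists>H. C1G (\<lambda>x. G x $ i) H)"
proof -
  obtain g where g: "\<forall>x. (h has_derivative (\<lambda>w. g x \<bullet> w)) (at x)" "\<forall>i. C1_fun (\<lambda>x. g x $ i)"
    using assms unfolding C2c_on_def C2_fun_def by blast
  have ci: "continuous_on UNIV (\<lambda>x. g x $ i)" for i
  proof -
    obtain H where "C1G (\<lambda>x. g x $ i) H" using C1_fun_C1G g(2) by blast
    then have "\<forall>x. ((\<lambda>x. g x $ i) has_derivative (\<lambda>w. H x \<bullet> w)) (at x)" unfolding C1G_def by blast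
    then show ?thesis
      by (intro continuous_at_imp_continuous_on) (use has_derivative_continuous in blast)
  qed
  have "continuous_on UNIV (\<lambda>x. \<chi> i. g x $ i)" by (intro continuous_on_vec_lambda ci)
  then have "continuous_on UNIV g" by simp
  then have "C1G h g" unfolding C1G_def using g(1) by blast
  moreover have "\<forall>i. \<exists>H. C1G (\<lambda>x. g x $ i) H" using C1_fun_C1G g(2) by blast
  ultimately show ?thesis by blast
qed



lemma C1G_inner:
  fixes G :: "real^2 \<Rightarrow> real^2" and v :: "real^2"
  assumes "C1G (\<lambda>x. G x $ 1) A" "C1G (\<lambda>x. G x $ 2) B"
  shows "C1G (\<lambda>x. G x \<bullet> v) (\<lambda>x. v$1 *\<^sub>R A x + v$2 *\<^sub>R B x)"
proof -
  have e: "(\<lambda>x. G x \<bullet> v) = (\<lambda>x. v$1 * G x $ 1 + v$2 * G x $ 2)"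
    by (rule ext) (simp add: inner_vec_def sum_2 mult.commute)
  show ?thesis unfolding e by (rule C1G_lin[OF assms])
qed

lemma C1G_perp:
  fixes f :: "real^2 \<Rightarrow> real^2" and w :: "real^2"
  assumes "C1G (\<lambda>x. f x $ 1) A" "C1G (\<lambda>x. f x $ 2) B"
  shows "C1G (\<lambda>x. f x \<bullet> perp w) (\<lambda>x. (- w$2) *\<^sub>R A x + w$1 *\<^sub>R B x)"
proof -
  have e: "(\<lambda>x. f x \<bullet> perp w) = (\<lambda>x. (- w$2) * f x $ 1 + w$1 * f x $ 2)"
    by (rule ext) (simp add: inner_vec_def sum_2 perp_def mult.commute)
  show ?thesis unfolding e by (rule C1G_lin[OF assms])
qed

lemma C1G_D: "C1G h G \<Longrightarrow> \<forall>x. (h has_derivative (\<lambda>w. G x \<bullet> w)) (at x)"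
  and C1G_C: "C1G h G \<Longrightarrow> continuous_on UNIV G"
  unfolding C1G_def by auto



lemma div_formula:
  fixes u v :: "real^2" and f :: "real^2 \<Rightarrow> real^2"
  assumes u: "norm u = 1" and v: "norm v = 1" and d: "v$1 * u$2 - u$1 * v$2 \<noteq> 0"
    and r: "0 < r"
    and f1: "C2c_on (ball 0 r) (\<lambda>x. f x $ 1)" and f2: "C2c_on (ball 0 r) (\<lambda>x. f x $ 2)"
  shows "divg f x = - (1 / (v$1 * u$2 - u$1 * v$2)) * dirD u (dirD v (TV u v f)) x"
proof -
  obtain G1 where G1: "C1G (\<lambda>x. f x $ 1) G1" and H1: "\<forall>i. \<exists>H. C1G (\<lambda>x. G1 x $ i) H"
    using C2c_struct[OF f1] by blast
  obtain G2 where G2: "C1G (\<lambda>x. f x $ 2) G2" and H2: "\<forall>i. \<exists>H. C1G (\<lambda>x. G2 x $ i) H"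
    using C2c_struct[OF f2] by blast
  obtain H11 where H11: "C1G (\<lambda>x. G1 x $ 1) H11" using H1 by blast
  obtain H12 where H12: "C1G (\<lambda>x. G1 x $ 2) H12" using H1 by blast
  obtain H21 where H21: "C1G (\<lambda>x. G2 x $ 1) H21" using H2 by blast
  obtain H22 where H22: "C1G (\<lambda>x. G2 x $ 2) H22" using H2 by blast
  have R: "0 \<le> r" using r by simp
  have z: "\<forall>y. r < norm y \<longrightarrow> f y \<bullet> perp w = 0" for w
  proof (intro allI impI)
    fix y :: "real^2" assume "r < norm y"
    then have "f y $ 1 = 0" "f y $ 2 = 0" using C2c_supp[OF f1] C2c_supp[OF f2] by auto
    then show "f y \<bullet> perp w = 0" by (simp add: inner_vec_def sum_2)
  qed
  define Gu where "Gu = (\<lambda>x. (- u$2) *\<^sub>R G1 x + u$1 *\<^sub>R G2 x)"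
  define Gv where "Gv = (\<lambda>x. (- v$2) *\<^sub>R G1 x + v$1 *\<^sub>R G2 x)"
  have CU: "C1G (\<lambda>x. f x \<bullet> perp u) Gu" unfolding Gu_def by (rule C1G_perp[OF G1 G2])
  have CV: "C1G (\<lambda>x. f x \<bullet> perp v) Gv" unfolding Gv_def by (rule C1G_perp[OF G1 G2])
  define k where "k = (\<lambda>y. Gu y \<bullet> v)"
  define K where "K = (\<lambda>x. (- u$2) *\<^sub>R (v$1 *\<^sub>R H11 x + v$2 *\<^sub>R H12 x) + u$1 *\<^sub>R (v$1 *\<^sub>R H21 x + v$2 *\<^sub>R H22 x))"
  have ke: "k = (\<lambda>x. (- u$2) * (G1 x \<bullet> v) + u$1 * (G2 x \<bullet> v))"
    unfolding k_def Gu_def by (rule ext) (simp add: inner_add_left inner_diff_left)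
  have CK: "C1G k K" unfolding ke K_def
    by (rule C1G_lin[OF C1G_inner[OF H11 H12] C1G_inner[OF H21 H22]])
  have kz: "\<forall>y. r < norm y \<longrightarrow> k y = 0"
    using grad_zero[OF C1G_D[OF CU] z] unfolding k_def by auto
  have TVe: "TV u v f = (\<lambda>x. - rayX u (\<lambda>y. f y \<bullet> perp u) x + rayX v (\<lambda>y. f y \<bullet> perp v) x)"
    by (rule ext) (simp add: TV_def)
  have D1: "(TV u v f has_derivative (\<lambda>w. - rayX u (\<lambda>z. Gu z \<bullet> w) y + rayX v (\<lambda>z. Gv z \<bullet> w) y)) (at y)" for y
    unfolding TVe
    by (rule has_derivative_add[OF has_derivative_minus[OF rayX_deriv[OF u C1G_D[OF CU] C1G_C[OF CU] z R]]
          rayX_deriv[OF v C1G_D[OF CV] C1G_C[OF CV] z R]])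
  have DV: "dirD v (TV u v f) = (\<lambda>y. - rayX u k y - f y \<bullet> perp v)"
  proof (rule ext)
    fix y
    have "dirD v (TV u v f) y = - rayX u (\<lambda>z. Gu z \<bullet> v) y + rayX v (\<lambda>z. Gv z \<bullet> v) y"
      unfolding dirD_def frechet_derivative_at[OF D1[of y], symmetric] by simp
    also have "rayX v (\<lambda>z. Gv z \<bullet> v) y = - (f y \<bullet> perp v)"
      by (rule rayX_ftc[OF v C1G_D[OF CV] z R])
    finally show "dirD v (TV u v f) y = - rayX u k y - f y \<bullet> perp v" by (simp add: k_def)
  qed
  have D2: "((\<lambda>y. - rayX u k y - f y \<bullet> perp v) has_derivative
       (\<lambda>w. - rayX u (\<lambda>z. K z \<bullet> w) x - Gv x \<bullet> w)) (at x)"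
    by (rule has_derivative_diff[OF has_derivative_minus[OF rayX_deriv[OF u C1G_D[OF CK] C1G_C[OF CK] kz R]]])
       (use C1G_D[OF CV] in blast)
  have "dirD u (dirD v (TV u v f)) x = - rayX u (\<lambda>z. K z \<bullet> u) x - Gv x \<bullet> u"
    unfolding DV dirD_def frechet_derivative_at[OF D2, symmetric] by simp
  also have "rayX u (\<lambda>z. K z \<bullet> u) x = - k x"
    by (rule rayX_ftc[OF u C1G_D[OF CK] kz R])
  finally have E: "dirD u (dirD v (TV u v f)) x = Gu x \<bullet> v - Gv x \<bullet> u" by (simp add: k_def)
  have dv: "divg f x = G1 x $ 1 + G2 x $ 2"
    unfolding divg_def
    using frechet_derivative_at[OF spec[OF C1G_D[OF G1], of x], symmetric]
      frechet_derivative_at[OF spec[OF C1G_D[OF G2], of x], symmetric]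
    by (simp add: inner_axis)
  show ?thesis unfolding dv E Gu_def Gv_def using d
    by (simp add: inner_vec_def sum_2 field_simps)
qed



definition cvec :: "complex \<Rightarrow> real^2" where "cvec z = vector [Re z, Im z]"

lemma cvec_comp [simp]: "cvec z $ 1 = Re z" "cvec z $ 2 = Im z"
  by (simp_all add: cvec_def)

lemma linear_cvec: "bounded_linear cvec"
proof -
  have "linear cvec"
    by (rule linearI) (simp_all add: vec_eq_iff forall_2)
  then show ?thesis by (simp add: linear_conv_bounded_linear)
qed

lemma norm_cvec: "norm (cvec z) = cmod z"
  by (simp add: norm_vec_def L2_set_def sum_2 cmod_def)

lemma inner_cvec: "(A :: real^2) \<bullet> cvec w = A $ 1 * Re w + A $ 2 * Im w"
  by (simp add: inner_vec_def sum_2)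

lemma zero_field:
  fixes p q :: "real^2 \<Rightarrow> real"
  assumes CP: "C1G p P" and CQ: "C1G q Q"
    and dv: "\<forall>x. P x $ 1 + Q x $ 2 = 0" and cu: "\<forall>x. Q x $ 1 - P x $ 2 = 0"
    and sp: "\<forall>y. r < norm y \<longrightarrow> p y = 0 \<and> q y = 0"
  shows "p x = 0 \<and> q x = 0"
proof -
  define F where "F = (\<lambda>z. complex_of_real (p (cvec z)) - \<i> * complex_of_real (q (cvec z)))"
  have dcv: "(cvec has_derivative cvec) (at z)" for z
    by (rule bounded_linear_imp_has_derivative[OF linear_cvec])
  have hF: "(F has_field_derivative Complex (P (cvec z) $ 1) (- P (cvec z) $ 2)) (at z)" for z
  proof -
    have dp: "((\<lambda>z. p (cvec z)) has_derivative (\<lambda>w. P (cvec z) \<bullet> cvec w)) (at z)"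
      using has_derivative_compose[OF dcv, of p] C1G_D[OF CP] by blast
    have dq: "((\<lambda>z. q (cvec z)) has_derivative (\<lambda>w. Q (cvec z) \<bullet> cvec w)) (at z)"
      using has_derivative_compose[OF dcv, of q] C1G_D[OF CQ] by blast
    have "(F has_derivative (\<lambda>w. complex_of_real (P (cvec z) \<bullet> cvec w) - \<i> * complex_of_real (Q (cvec z) \<bullet> cvec w))) (at z)"
      unfolding F_def
      by (intro has_derivative_diff has_derivative_mult_right has_derivative_of_real dp dq)
    moreover have "(\<lambda>w. complex_of_real (P (cvec z) \<bullet> cvec w) - \<i> * complex_of_real (Q (cvec z) \<bullet> cvec w))
        = (*) (Complex (P (cvec z) $ 1) (- P (cvec z) $ 2))"
    proof (rule ext, rule complex_eqI)
      fix w
      have a: "Q (cvec z) $ 2 = - P (cvec z) $ 1" using dv by (metis add_eq_0_iff)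
      have b: "Q (cvec z) $ 1 = P (cvec z) $ 2" using cu by (metis eq_iff_diff_eq_0)
      show "Re (complex_of_real (P (cvec z) \<bullet> cvec w) - \<i> * complex_of_real (Q (cvec z) \<bullet> cvec w)) =
          Re (Complex (P (cvec z) $ 1) (- P (cvec z) $ 2) * w)"
        by (simp add: inner_cvec)
      show "Im (complex_of_real (P (cvec z) \<bullet> cvec w) - \<i> * complex_of_real (Q (cvec z) \<bullet> cvec w)) =
          Im (Complex (P (cvec z) $ 1) (- P (cvec z) $ 2) * w)"
        by (simp add: inner_cvec a b algebra_simps)
    qed
    ultimately show ?thesis by (simp add: has_field_derivative_def)
  qed
  have hol: "F holomorphic_on UNIV"
    unfolding holomorphic_on_def field_differentiable_def
    using hF has_field_derivative_at_within by blast
  have lim: "(F \<longlongrightarrow> 0) at_infinity"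
  proof (rule tendsto_eventually)
    show "\<forall>\<^sub>F z in at_infinity. F z = 0"
      unfolding eventually_at_infinity
    proof (intro exI allI impI)
      fix z :: complex assume "r + 1 \<le> norm z"
      then have "r < norm (cvec z)" by (simp add: norm_cvec)
      then show "F z = 0" using sp by (simp add: F_def)
    qed
  qed
  define z where "z = Complex (x $ 1) (x $ 2)"
  have cz: "cvec z = x" by (simp add: z_def vec_eq_iff forall_2)
  have "F z = 0" by (rule Liouville_weak_0[OF hol lim])
  then have "Re (F z) = 0" "Im (F z) = 0" by simp_all
  then show ?thesis by (simp add: F_def cz)
qed



lemma divg_eq:
  assumes A: "C1G (\<lambda>x. f x $ 1) A" and B: "C1G (\<lambda>x. f x $ 2) B"
  shows "divg f x = A x $ 1 + B x $ 2"
  unfolding divg_def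
  using frechet_derivative_at[OF spec[OF C1G_D[OF A], of x], symmetric]
    frechet_derivative_at[OF spec[OF C1G_D[OF B], of x], symmetric]
  by (simp add: inner_axis)

lemma curl_eq:
  assumes A: "C1G (\<lambda>x. f x $ 1) A" and B: "C1G (\<lambda>x. f x $ 2) B" and c: "curl_free f"
  shows "B x $ 1 - A x $ 2 = 0"
  using spec[OF c[unfolded curl_free_def], of x]
  using frechet_derivative_at[OF spec[OF C1G_D[OF A], of x], symmetric]
    frechet_derivative_at[OF spec[OF C1G_D[OF B], of x], symmetric]
  by (simp add: inner_axis)

lemma det_nz:
  fixes u v :: "real^2"
  assumes u: "norm u = 1" and li: "\<forall>a b::real. a *\<^sub>R u + b *\<^sub>R v = 0 \<longrightarrow> a = 0 \<and> b = 0"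
  shows "v$1 * u$2 - u$1 * v$2 \<noteq> 0"
proof
  assume d: "v$1 * u$2 - u$1 * v$2 = 0"
  have e2: "v$2 *\<^sub>R u + (- u$2) *\<^sub>R v = 0"
    using d by (simp add: vec_eq_iff forall_2 algebra_simps)
  have 2: "v$2 = 0" "u$2 = 0" using li[rule_format, OF e2] by simp_all
  have e1: "v$1 *\<^sub>R u + (- u$1) *\<^sub>R v = 0"
    using d by (simp add: vec_eq_iff forall_2 algebra_simps)
  have 1: "v$1 = 0" "u$1 = 0" using li[rule_format, OF e1] by simp_all
  have "u = 0" using 1 2 by (simp add: vec_eq_iff forall_2)
  then show False using u by simp
qed

theorem theorem4:
  fixes u v :: "real^2" and r :: real
  assumes "norm u = 1" and "norm v = 1"
    and "\<forall>a b::real. a *\<^sub>R u + b *\<^sub>R v = 0 \<longrightarrow> a = 0 \<and> b = 0"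
    and "r > 0"
  shows "(\<forall>f::real^2 \<Rightarrow> real^2. C2c_on (ball 0 r) (\<lambda>x. f x $ 1) \<and> C2c_on (ball 0 r) (\<lambda>x. f x $ 2) \<longrightarrow>
            (\<forall>x. divg f x = - (1 / (v$1 * u$2 - u$1 * v$2)) * dirD u (dirD v (TV u v f)) x))
       \<and> inj_on (TV u v) {f. C2c_on (ball 0 r) (\<lambda>x. f x $ 1) \<and> C2c_on (ball 0 r) (\<lambda>x. f x $ 2)
                               \<and> curl_free f}"
proof -
  have d: "v$1 * u$2 - u$1 * v$2 \<noteq> 0" by (rule det_nz[OF assms(1,3)])
  have DF: "divg f x = - (1 / (v$1 * u$2 - u$1 * v$2)) * dirD u (dirD v (TV u v f)) x"
    if "C2c_on (ball 0 r) (\<lambda>x. f x $ 1)" "C2c_on (ball 0 r) (\<lambda>x. f x $ 2)" for f :: "real^2 \<Rightarrow> real^2" and x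
    by (rule div_formula[OF assms(1,2) d assms(4) that])
  show ?thesis
  proof (intro conjI allI impI)
    fix f :: "real^2 \<Rightarrow> real^2" and x assume "C2c_on (ball 0 r) (\<lambda>x. f x $ 1) \<and> C2c_on (ball 0 r) (\<lambda>x. f x $ 2)"
    then show "divg f x = - (1 / (v$1 * u$2 - u$1 * v$2)) * dirD u (dirD v (TV u v f)) x"
      using DF by blast
  next
    show "inj_on (TV u v) {f. C2c_on (ball 0 r) (\<lambda>x. f x $ 1) \<and> C2c_on (ball 0 r) (\<lambda>x. f x $ 2)
                               \<and> curl_free f}"
    proof (rule inj_onI)
      fix f g :: "real^2 \<Rightarrow> real^2"
      assume "f \<in> {f. C2c_on (ball 0 r) (\<lambda>x. f x $ 1) \<and> C2c_on (ball 0 r) (\<lambda>x. f x $ 2) \<and> curl_free f}"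
        and "g \<in> {f. C2c_on (ball 0 r) (\<lambda>x. f x $ 1) \<and> C2c_on (ball 0 r) (\<lambda>x. f x $ 2) \<and> curl_free f}"
        and T: "TV u v f = TV u v g"
      then have f1: "C2c_on (ball 0 r) (\<lambda>x. f x $ 1)" and f2: "C2c_on (ball 0 r) (\<lambda>x. f x $ 2)"
        and fc: "curl_free f"
        and g1: "C2c_on (ball 0 r) (\<lambda>x. g x $ 1)" and g2: "C2c_on (ball 0 r) (\<lambda>x. g x $ 2)"
        and gc: "curl_free g" by auto
      have dd: "divg f x = divg g x" for x using DF[OF f1 f2, of x] DF[OF g1 g2, of x] T by simp
      obtain Af where Af: "C1G (\<lambda>x. f x $ 1) Af" using C2c_struct[OF f1] by blast
      obtain Bf where Bf: "C1G (\<lambda>x. f x $ 2) Bf" using C2c_struct[OF f2] by blast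
      obtain Ag where Ag: "C1G (\<lambda>x. g x $ 1) Ag" using C2c_struct[OF g1] by blast
      obtain Bg where Bg: "C1G (\<lambda>x. g x $ 2) Bg" using C2c_struct[OF g2] by blast
      define p where "p = (\<lambda>x. 1 * f x $ 1 + (-1) * g x $ 1)"
      define q where "q = (\<lambda>x. 1 * f x $ 2 + (-1) * g x $ 2)"
      define P where "P = (\<lambda>x. 1 *\<^sub>R Af x + (-1) *\<^sub>R Ag x)"
      define Q where "Q = (\<lambda>x. 1 *\<^sub>R Bf x + (-1) *\<^sub>R Bg x)"
      have CP: "C1G p P" unfolding p_def P_def by (rule C1G_lin[OF Af Ag])
      have CQ: "C1G q Q" unfolding q_def Q_def by (rule C1G_lin[OF Bf Bg])
      have dv: "\<forall>x. P x $ 1 + Q x $ 2 = 0"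
      proof
        fix x
        show "P x $ 1 + Q x $ 2 = 0"
          using dd[of x] divg_eq[OF Af Bf, of x] divg_eq[OF Ag Bg, of x] by (simp add: P_def Q_def)
      qed
      have cu: "\<forall>x. Q x $ 1 - P x $ 2 = 0"
      proof
        fix x
        show "Q x $ 1 - P x $ 2 = 0"
          using curl_eq[OF Af Bf fc, of x] curl_eq[OF Ag Bg gc, of x] by (simp add: P_def Q_def)
      qed
      have sp: "\<forall>y. r < norm y \<longrightarrow> p y = 0 \<and> q y = 0"
        using C2c_supp[OF f1] C2c_supp[OF f2] C2c_supp[OF g1] C2c_supp[OF g2]
        by (simp add: p_def q_def)
      have "p x = 0 \<and> q x = 0" for x by (rule zero_field[OF CP CQ dv cu sp])
      then show "f = g" by (simp add: p_def q_def fun_eq_iff vec_eq_iff forall_2)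
    qed
  qed
qed

end
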